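(* Let $G$ be a completable graph and let $A(G),B(G)$ be $G$-partial matrices with $0<A(G)\leq B(G)$. Then $0<\det(\widehat{A})\leq\det(\widehat{B})$, where $\widehat{A},\widehat{B}$ are the maximum determinant positive definite completions of $A(G),B(G)$.
   Context: A graph $G=(V,E)$ is a finite undirected graph on $V=\{1,\dots,n\}$ containing all loops. A $G$-partial matrix has entries specified exactly for $\{i,j\}\in E$; a completion agrees with it on $E$; differences are entrywise on $E$. It is partial positive (semi)definite if Hermitian on $E$ and every principal submatrix indexed by a clique is positive (semi)definite. $C(G)\leq D(G)$ means $D(G)-C(G)$ is partial positive semidefinite, and $0<C(G)$ means $C(G)$ is partial positive definite. $G$ is completable if every $G$-partial positive semidefinite matrix has a positive semidefinite completion (equivalently chordal). The maximum determinant positive definite completion of a partial positive definite matrix is its unique positive definite completion of largest determinant. *)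

theory Defs
  imports Complex_Main "Jordan_Normal_Form.Determinant"
begin

(* Vertices are {0..<n} (paper: {1,...,n}); E is a set of ordered pairs,
   symmetric, containing all loops. Matrices are complex n x n matrices
   (JNF type 'complex mat'); a G-partial matrix is represented by any n x n
   matrix, of which only the entries indexed by E are ever used. *)

definition graph_on :: "nat \<Rightarrow> (nat \<times> nat) set \<Rightarrow> bool" where
  "graph_on n E \<longleftrightarrow> E \<subseteq> {0..<n} \<times> {0..<n} \<and>
     (\<forall>i j. (i, j) \<in> E \<longrightarrow> (j, i) \<in> E) \<and> (\<forall>i<n. (i, i) \<in> E)"

definition clique :: "nat \<Rightarrow> (nat \<times> nat) set \<Rightarrow> nat set \<Rightarrow> bool" where
  "clique n E C \<longleftrightarrow> C \<subseteq> {0..<n} \<and> (\<forall>i\<in>C. \<forall>j\<in>C. (i, j) \<in> E)"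

definition qform :: "nat set \<Rightarrow> complex mat \<Rightarrow> (nat \<Rightarrow> complex) \<Rightarrow> complex" where
  "qform C M x = (\<Sum>i\<in>C. \<Sum>j\<in>C. cnj (x i) * M $$ (i, j) * x j)"

definition hermitian_on :: "nat set \<Rightarrow> complex mat \<Rightarrow> bool" where
  "hermitian_on C M \<longleftrightarrow> (\<forall>i\<in>C. \<forall>j\<in>C. M $$ (j, i) = cnj (M $$ (i, j)))"

definition psd_on :: "nat set \<Rightarrow> complex mat \<Rightarrow> bool" where
  "psd_on C M \<longleftrightarrow> hermitian_on C M \<and> (\<forall>x. 0 \<le> Re (qform C M x))"

definition pd_on :: "nat set \<Rightarrow> complex mat \<Rightarrow> bool" where
  "pd_on C M \<longleftrightarrow> hermitian_on C M \<and>
     (\<forall>x. (\<exists>i\<in>C. x i \<noteq> 0) \<longrightarrow> 0 < Re (qform C M x))"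

definition herm_on_edges :: "(nat \<times> nat) set \<Rightarrow> complex mat \<Rightarrow> bool" where
  "herm_on_edges E M \<longleftrightarrow> (\<forall>(i, j)\<in>E. M $$ (j, i) = cnj (M $$ (i, j)))"

definition partial_psd :: "nat \<Rightarrow> (nat \<times> nat) set \<Rightarrow> complex mat \<Rightarrow> bool" where
  "partial_psd n E M \<longleftrightarrow> M \<in> carrier_mat n n \<and> herm_on_edges E M \<and>
     (\<forall>C. clique n E C \<longrightarrow> psd_on C M)"

definition partial_pd :: "nat \<Rightarrow> (nat \<times> nat) set \<Rightarrow> complex mat \<Rightarrow> bool" where
  "partial_pd n E M \<longleftrightarrow> M \<in> carrier_mat n n \<and> herm_on_edges E M \<and>
     (\<forall>C. clique n E C \<longrightarrow> pd_on C M)"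

definition partial_le :: "nat \<Rightarrow> (nat \<times> nat) set \<Rightarrow> complex mat \<Rightarrow> complex mat \<Rightarrow> bool" where
  "partial_le n E A B \<longleftrightarrow> partial_psd n E (B - A)"

definition is_completion :: "nat \<Rightarrow> (nat \<times> nat) set \<Rightarrow> complex mat \<Rightarrow> complex mat \<Rightarrow> bool" where
  "is_completion n E A M \<longleftrightarrow> M \<in> carrier_mat n n \<and> (\<forall>(i, j)\<in>E. M $$ (i, j) = A $$ (i, j))"

definition psd_mat :: "nat \<Rightarrow> complex mat \<Rightarrow> bool" where
  "psd_mat n M \<longleftrightarrow> M \<in> carrier_mat n n \<and> psd_on {0..<n} M"

definition pd_mat :: "nat \<Rightarrow> complex mat \<Rightarrow> bool" where
  "pd_mat n M \<longleftrightarrow> M \<in> carrier_mat n n \<and> pd_on {0..<n} M"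

definition completable :: "nat \<Rightarrow> (nat \<times> nat) set \<Rightarrow> bool" where
  "completable n E \<longleftrightarrow>
     (\<forall>A. partial_psd n E A \<longrightarrow> (\<exists>M. is_completion n E A M \<and> psd_mat n M))"

(* M is a maximum determinant positive definite completion of A
   (determinants of PD matrices are real; compared via Re) *)
definition is_maxdet_completion ::
  "nat \<Rightarrow> (nat \<times> nat) set \<Rightarrow> complex mat \<Rightarrow> complex mat \<Rightarrow> bool" where
  "is_maxdet_completion n E A M \<longleftrightarrow> is_completion n E A M \<and> pd_mat n M \<and>
     (\<forall>M'. is_completion n E A M' \<and> pd_mat n M' \<longrightarrow> Re (det M') \<le> Re (det M))"

end

theory Submission imports Defs "HOL-Analysis.Topology_Euclidean_Space" begin

definition dm :: "nat \<Rightarrow> (nat \<Rightarrow> nat \<Rightarrow> complex) \<Rightarrow> complex" where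
  "dm m F = det (Matrix.mat m m (\<lambda>(i,j). F i j))"

definition sc :: "nat \<Rightarrow> (nat \<Rightarrow> nat \<Rightarrow> complex) \<Rightarrow> nat \<Rightarrow> nat \<Rightarrow> complex" where
  "sc m F i j = F i j - F i m * F m j / F m m"

lemma dm_cong: "(\<And>i j. i < m \<Longrightarrow> j < m \<Longrightarrow> F i j = G i j) \<Longrightarrow> dm m F = dm m G"
  unfolding dm_def by (rule arg_cong[of _ _ det], rule eq_matI, auto)

lemma dm_schur:
  assumes a: "F m m \<noteq> 0"
  shows "dm (Suc m) F = F m m * dm m (sc m F)"
proof -
  define X where "X = Matrix.mat (Suc m) (Suc m) (\<lambda>(i,j). F i j)"
  define L where "L = Matrix.mat (Suc m) (Suc m) (\<lambda>(i,j). if i = j then 1 else if j = m then - F i m / F m m else (0::complex))"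
  have X: "X \<in> carrier_mat (Suc m) (Suc m)" and L: "L \<in> carrier_mat (Suc m) (Suc m)"
    unfolding X_def L_def by auto
  have ut: "upper_triangular L" unfolding upper_triangular_def L_def by auto
  have "diag_mat L = map (\<lambda>i. 1) [0..<Suc m]"
    unfolding diag_mat_def L_def by (intro map_cong) (auto simp del: upt_Suc)
  then have dL: "det L = 1" using det_upper_triangular[OF ut L] by (simp del: upt_Suc add: map_replicate_const)
  define Y where "Y = L * X"
  have Y: "Y \<in> carrier_mat (Suc m) (Suc m)" unfolding Y_def using L X by auto
  have Yent: "Y $$ (i,j) = (if i < m then F i j - F i m / F m m * F m j else F i j)"
    if i: "i < Suc m" and j: "j < Suc m" for i j
  proof -
    have "Y $$ (i,j) = (\<Sum>l<Suc m. L $$ (i,l) * X $$ (l,j))"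
      unfolding Y_def using i j L X by (simp add: scalar_prod_def atLeast0LessThan)
    also have "\<dots> = (\<Sum>l<Suc m. (if l = i then 1 else if l = m then - F i m / F m m else 0) * F l j)"
      using that by (intro sum.cong) (auto simp: L_def X_def)
    also have "\<dots> = (if i < m then F i j - F i m / F m m * F m j else F i j)"
    proof (cases "i < m")
      case True
      have "(\<Sum>l<Suc m. (if l = i then 1 else if l = m then - F i m / F m m else 0) * F l j)
         = (\<Sum>l\<in>{i,m}. (if l = i then 1 else if l = m then - F i m / F m m else 0) * F l j)"
        using True by (intro sum.mono_neutral_right) auto
      then show ?thesis using True by simp
    next
      case False
      then have "i = m" using i by auto
      have "(\<Sum>l<Suc m. (if l = i then 1 else if l = m then - F i m / F m m else 0) * F l j)
         = (\<Sum>l\<in>{i}. (if l = i then 1 else if l = m then - F i m / F m m else 0) * F l j)"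
        by (rule sum.mono_neutral_right, auto simp: \<open>i = m\<close>)
      then show ?thesis using False by simp
    qed
    finally show ?thesis .
  qed
  have "det Y = det X" unfolding Y_def using det_mult[OF L X] dL by simp
  also have "det Y = (\<Sum>i<Suc m. Y $$ (i,m) * cofactor Y i m)"
    using laplace_expansion_column[OF Y] by simp
  also have "\<dots> = (\<Sum>i\<in>{m}. Y $$ (i,m) * cofactor Y i m)"
    by (rule sum.mono_neutral_right, auto simp: Yent a)
  also have "\<dots> = F m m * det (mat_delete Y m m)"
    using Yent[of m m] by (simp add: cofactor_def)
  also have "mat_delete Y m m = Matrix.mat m m (\<lambda>(i,j). sc m F i j)"
    using Y by (intro eq_matI) (auto simp: mat_delete_def Yent sc_def)
  finally show ?thesis unfolding dm_def X_def by simp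
qed

definition Qf :: "nat \<Rightarrow> (nat \<Rightarrow> nat \<Rightarrow> complex) \<Rightarrow> (nat \<Rightarrow> complex) \<Rightarrow> complex" where
  "Qf m F x = (\<Sum>i<m. \<Sum>j<m. cnj (x i) * F i j * x j)"

definition hermf :: "nat \<Rightarrow> (nat \<Rightarrow> nat \<Rightarrow> complex) \<Rightarrow> bool" where
  "hermf m F \<longleftrightarrow> (\<forall>i<m. \<forall>j<m. F j i = cnj (F i j))"

definition psdf :: "nat \<Rightarrow> (nat \<Rightarrow> nat \<Rightarrow> complex) \<Rightarrow> bool" where
  "psdf m F \<longleftrightarrow> hermf m F \<and> (\<forall>x. 0 \<le> Re (Qf m F x))"

definition pdf :: "nat \<Rightarrow> (nat \<Rightarrow> nat \<Rightarrow> complex) \<Rightarrow> bool" where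
  "pdf m F \<longleftrightarrow> hermf m F \<and> (\<forall>x. (\<exists>i<m. x i \<noteq> 0) \<longrightarrow> 0 < Re (Qf m F x))"

lemma Qf_cong: "(\<And>i. i < m \<Longrightarrow> x i = y i) \<Longrightarrow> Qf m F x = Qf m F y"
  unfolding Qf_def by (intro sum.cong refl) auto

lemma Qf_congF: "(\<And>i j. i < m \<Longrightarrow> j < m \<Longrightarrow> F i j = G i j) \<Longrightarrow> Qf m F x = Qf m G x"
  unfolding Qf_def by (intro sum.cong refl) auto

lemma Qf_add: "Qf m (\<lambda>i j. F i j + G i j) x = Qf m F x + Qf m G x"
  unfolding Qf_def by (simp add: algebra_simps sum.distrib)

lemma Qf_diff: "Qf m (\<lambda>i j. F i j - G i j) x = Qf m F x - Qf m G x"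
  unfolding Qf_def by (simp add: algebra_simps sum_subtractf)

lemma Qf_scale: "Qf m (\<lambda>i j. c * F i j) x = c * Qf m F x"
  unfolding Qf_def by (simp add: algebra_simps sum_distrib_left)

lemma herm_real: "hermf (Suc m) F \<Longrightarrow> cnj (F m m) = F m m"
  unfolding hermf_def by (metis lessI complex_cnj_cnj)

lemma Q_square:
  fixes x :: "nat \<Rightarrow> complex" and t :: complex
  assumes h: "hermf (Suc m) F" and a: "F m m \<noteq> 0"
  defines "u \<equiv> (\<Sum>j<m. F m j * x j)"
  shows "Qf (Suc m) F (x(m:=t)) = Qf m (sc m F) x + F m m * cnj (t + u / F m m) * (t + u / F m m)"
proof -
  let ?y = "x(m:=t)"
  have "Qf (Suc m) F ?y = (\<Sum>i<m. (\<Sum>j<m. cnj (?y i) * F i j * ?y j) + cnj (?y i) * F i m * ?y m)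
      + ((\<Sum>j<m. cnj (?y m) * F m j * ?y j) + cnj (?y m) * F m m * ?y m)"
    unfolding Qf_def by simp
  also have "\<dots> = Qf m F x + (\<Sum>i<m. cnj (x i) * F i m) * t + cnj t * u + cnj t * F m m * t"
  proof -
    have e1: "(\<Sum>i<m. (\<Sum>j<m. cnj (?y i) * F i j * ?y j) + cnj (?y i) * F i m * ?y m)
       = Qf m F x + (\<Sum>i<m. cnj (x i) * F i m) * t"
      unfolding Qf_def by (simp add: sum.distrib sum_distrib_right)
    have e2: "(\<Sum>j<m. cnj (?y m) * F m j * ?y j) = cnj t * u"
      unfolding u_def by (simp add: sum_distrib_left mult.assoc)
    show ?thesis unfolding e1 e2 by simp
  qed
  finally have s1: "Qf (Suc m) F ?y = Qf m F x + (\<Sum>i<m. cnj (x i) * F i m) * t + cnj t * u + cnj t * F m m * t" .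
  have s2: "(\<Sum>i<m. cnj (x i) * F i m) = cnj u"
  proof -
    have hm: "F j m = cnj (F m j)" if "j < m" for j
      using h that unfolding hermf_def by (meson less_Suc_eq lessI)
    show ?thesis unfolding u_def by (auto simp: hm intro!: sum.cong)
  qed
  have "Qf m (sc m F) x = (\<Sum>i<m. \<Sum>j<m. cnj (x i) * F i j * x j - (cnj (x i) * F i m) * (F m j * x j) / F m m)"
    unfolding Qf_def sc_def by (intro sum.cong refl) (simp add: algebra_simps)
  also have "\<dots> = Qf m F x - (\<Sum>i<m. cnj (x i) * F i m) * (\<Sum>j<m. F m j * x j) / F m m"
    unfolding Qf_def by (simp add: sum_subtractf sum_product sum_divide_distrib)
  finally have s3: "Qf m (sc m F) x = Qf m F x - cnj u * u / F m m" using s2 u_def by simp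
  have r: "cnj (F m m) = F m m" using herm_real[OF h] .
  have e: "F m m * cnj (t + u / F m m) * (t + u / F m m) = F m m * cnj t * t + cnj t * u + cnj u * t + cnj u * u / F m m"
    using a r by (simp add: field_simps)
  show ?thesis unfolding s1 s3 e s2 by (simp add: algebra_simps)
qed

lemma dm0: "dm 0 F = 1"
  unfolding dm_def by (rule det_dim_zero) auto

lemma cnj_mult_self: "cnj z * z = complex_of_real ((norm z)^2)"
  using complex_norm_square[of z] by (simp add: mult.commute)

lemma Q_opt:
  assumes h: "hermf (Suc m) F" and a: "F m m \<noteq> 0"
  shows "\<exists>t. Qf (Suc m) F (x(m:=t)) = Qf m (sc m F) x"
proof -
  define u where "u = (\<Sum>j<m. F m j * x j)"
  have "Qf (Suc m) F (x(m:= - u / F m m)) = Qf m (sc m F) x"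
    using Q_square[OF h a, of x "- u / F m m"] unfolding u_def by simp
  then show ?thesis by blast
qed

lemma Qf_one:
  assumes "p < m" and z: "\<And>i. i \<noteq> p \<Longrightarrow> x i = 0"
  shows "Qf m F x = cnj (x p) * F p p * x p"
proof -
  have "Qf m F x = (\<Sum>i\<in>{p}. \<Sum>j<m. cnj (x i) * F i j * x j)"
    unfolding Qf_def using assms by (intro sum.mono_neutral_right) auto
  also have "\<dots> = (\<Sum>i\<in>{p}. \<Sum>j\<in>{p}. cnj (x i) * F i j * x j)"
    using assms by (intro sum.cong refl sum.mono_neutral_right) auto
  finally show ?thesis by simp
qed

lemma Qf_delta: "k < m \<Longrightarrow> Qf m F (\<lambda>i. if i = k then 1 else 0) = F k k"
  by (subst Qf_one[of k]) auto

lemma Qf_two: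
  assumes "p \<noteq> q" "p < m" "q < m" and z: "\<And>i. i \<noteq> p \<Longrightarrow> i \<noteq> q \<Longrightarrow> x i = 0"
  shows "Qf m F x = cnj (x p) * F p p * x p + cnj (x p) * F p q * x q
     + cnj (x q) * F q p * x p + cnj (x q) * F q q * x q"
proof -
  have "Qf m F x = (\<Sum>i\<in>{p,q}. \<Sum>j<m. cnj (x i) * F i j * x j)"
    unfolding Qf_def using assms by (intro sum.mono_neutral_right) auto
  also have "\<dots> = (\<Sum>i\<in>{p,q}. \<Sum>j\<in>{p,q}. cnj (x i) * F i j * x j)"
    using assms by (intro sum.cong refl sum.mono_neutral_right) auto
  finally show ?thesis using assms(1) by (simp add: algebra_simps)
qed

lemma pdf_pivot:
  assumes "pdf (Suc m) F" shows "0 < Re (F m m)"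
proof -
  have "\<forall>x. (\<exists>i<Suc m. x i \<noteq> 0) \<longrightarrow> 0 < Re (Qf (Suc m) F x)" using assms unfolding pdf_def by blast
  then have "0 < Re (Qf (Suc m) F (\<lambda>i. if i = m then 1 else 0))" by force
  then show ?thesis using Qf_delta[of m "Suc m" F] by simp
qed

lemma psdf_diag:
  assumes "psdf m F" "k < m" shows "0 \<le> Re (F k k)"
proof -
  have "\<forall>x. 0 \<le> Re (Qf m F x)" using assms unfolding psdf_def by blast
  then have "0 \<le> Re (Qf m F (\<lambda>i. if i = k then 1 else 0))" by blast
  then show ?thesis using Qf_delta[of k m F] assms(2) by simp
qed

lemma herm_diag_real:
  assumes "hermf m F" "k < m" shows "F k k = of_real (Re (F k k))"
proof -
  from assms(1) have "\<forall>i<m. \<forall>j<m. F j i = cnj (F i j)" by (simp only: hermf_def)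
  then have "F k k = cnj (F k k)" using assms(2) by blast
  then have "Im (F k k) = 0" by (simp add: complex_eq_iff)
  then show ?thesis by (simp add: complex_eq_iff)
qed

lemma pdf_pivot_real: "pdf (Suc m) F \<Longrightarrow> F m m = of_real (Re (F m m))"
  unfolding pdf_def using herm_diag_real by blast

lemma sc_herm:
  assumes h: "hermf (Suc m) F"
  shows "hermf m (sc m F)"
proof -
  have r: "cnj (F m m) = F m m" using herm_real[OF h] .
  have hh: "F j i = cnj (F i j)" if "i < Suc m" "j < Suc m" for i j
    using h that unfolding hermf_def by blast
  show ?thesis unfolding hermf_def sc_def
  proof (intro allI impI)
    fix i j assume "i < m" "j < m"
    then show "F j i - F j m * F m i / F m m = cnj (F i j - F i m * F m j / F m m)"
      using hh[of i j] hh[of i m] hh[of m j] r by (simp add: mult.commute)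
  qed
qed

lemma sc_pd:
  assumes p: "pdf (Suc m) F"
  shows "pdf m (sc m F)"
proof -
  have h: "hermf (Suc m) F" using p unfolding pdf_def by blast
  have a: "F m m \<noteq> 0" using pdf_pivot[OF p] by auto
  show ?thesis unfolding pdf_def
  proof (intro conjI allI impI)
    show "hermf m (sc m F)" by (rule sc_herm[OF h])
    fix x :: "nat \<Rightarrow> complex" assume "\<exists>i<m. x i \<noteq> 0"
    then obtain i where i: "i < m" "x i \<noteq> 0" by blast
    obtain t :: complex where t: "Qf (Suc m) F (x(m:=t)) = Qf m (sc m F) x" using Q_opt[OF h a] by blast
    have "0 < Re (Qf (Suc m) F (x(m:=t)))"
      using p i unfolding pdf_def by (metis fun_upd_other less_SucI less_irrefl_nat)
    then show "0 < Re (Qf m (sc m F) x)" using t by simp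
  qed
qed

lemma sc_min:
  assumes h: "hermf (Suc m) F" and a: "0 < Re (F m m)"
  shows "Re (Qf m (sc m F) x) \<le> Re (Qf (Suc m) F (x(m:=t)))"
proof -
  have a0: "F m m \<noteq> 0" using a by auto
  define z where "z = t + (\<Sum>j<m. F m j * x j) / F m m"
  have e: "Qf (Suc m) F (x(m:=t)) = Qf m (sc m F) x + F m m * cnj z * z"
    using Q_square[OF h a0, of x t] unfolding z_def by simp
  have r: "F m m = of_real (Re (F m m))" using herm_diag_real[OF h, of m] by simp
  have nz: "cnj z * z = of_real ((norm z)^2)" using complex_norm_square[of z] by (simp add: mult.commute)
  have "F m m * cnj z * z = of_real (Re (F m m)) * of_real ((norm z)^2)" using r nz by (metis mult.assoc)
  then have "F m m * cnj z * z = of_real (Re (F m m) * (norm z)^2)" by simp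
  then have "0 \<le> Re (F m m * cnj z * z)" using a by simp
  then show ?thesis using e by simp
qed

lemma det_pos: "pdf m F \<Longrightarrow> \<exists>r>0. dm m F = of_real r"
proof (induction m arbitrary: F)
  case 0
  then show ?case unfolding dm_def by (intro exI[of _ 1]) auto
next
  case (Suc m)
  have a: "0 < Re (F m m)" using pdf_pivot[OF Suc.prems] .
  have r: "F m m = of_real (Re (F m m))" using pdf_pivot_real[OF Suc.prems] .
  obtain r1 where r1: "r1 > 0" "dm m (sc m F) = of_real r1" using Suc.IH[OF sc_pd[OF Suc.prems]] by blast
  have "dm (Suc m) F = F m m * of_real r1"
    using dm_schur[of F m] a r1 by (metis zero_less_iff_neq_zero zero_complex.sel(1) less_irrefl)
  also have "\<dots> = of_real (Re (F m m) * r1)" using r by (metis of_real_mult)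
  finally have "dm (Suc m) F = of_real (Re (F m m) * r1)" .
  then show ?case using a r1 by (intro exI[of _ "Re (F m m) * r1"]) auto
qed

lemma psd_zero_col:
  assumes P: "psdf m P" and k: "k < m" and z: "P k k = 0" and i: "i < m"
  shows "P i k = 0"
proof (cases "i = k")
  case True then show ?thesis using z by simp
next
  case False
  define b where "b = P i k"
  define d where "d = Re (P i i)"
  have h: "hermf m P" using P unfolding psdf_def by blast
  have Pki: "P k i = cnj b"
  proof -
    have "\<forall>i<m. \<forall>j<m. P j i = cnj (P i j)" using h by (simp only: hermf_def)
    then show ?thesis using i k unfolding b_def by blast
  qed
  have Pii: "P i i = of_real d" unfolding d_def using herm_diag_real[OF h i] .
  have d0: "0 \<le> d" unfolding d_def using psdf_diag[OF P i] .
  define s where "s = 1 / (d + 1)"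
  have s: "0 < s" unfolding s_def using d0 by simp
  have sd: "s * d < 1" unfolding s_def using d0 by (simp add: field_simps)
  define x where "x = (\<lambda>l. if l = i then of_real (-s) * b else if l = k then 1 else (0::complex))"
  have "Qf m P x = cnj (x i) * P i i * x i + cnj (x i) * P i k * x k
     + cnj (x k) * P k i * x i + cnj (x k) * P k k * x k"
    using False i k by (intro Qf_two) (auto simp: x_def)
  also have "\<dots> = of_real (s^2 * d - 2 * s) * (cnj b * b)"
    using False by (simp add: x_def Pki Pii z b_def[symmetric] algebra_simps power2_eq_square)
  also have "cnj b * b = of_real ((norm b)^2)" using complex_norm_square[of b] by (simp add: mult.commute)
  finally have "Qf m P x = of_real ((s^2 * d - 2 * s) * (norm b)^2)" by simp
  moreover have "0 \<le> Re (Qf m P x)" using P unfolding psdf_def by blast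
  ultimately have "0 \<le> (s^2 * d - 2 * s) * (norm b)^2" by simp
  moreover have "s^2 * d - 2 * s < 0"
  proof -
    have "s^2 * d - 2 * s = s * (s * d - 2)" by (simp add: algebra_simps power2_eq_square)
    also have "\<dots> < 0" using s sd by (simp add: mult_pos_neg)
    finally show ?thesis .
  qed
  ultimately have "(norm b)^2 \<le> 0" by (simp add: zero_le_mult_iff)
  then show ?thesis unfolding b_def by simp
qed

lemma pd_add_psd:
  assumes A: "pdf m A" and P: "psdf m P"
  shows "pdf m (\<lambda>i j. A i j + P i j)"
  unfolding pdf_def
proof (intro conjI allI impI)
  show "hermf m (\<lambda>i j. A i j + P i j)" unfolding hermf_def
  proof (intro allI impI)
    fix i j assume ij: "i < m" "j < m"
    have "\<forall>i<m. \<forall>j<m. A j i = cnj (A i j)" using A unfolding pdf_def hermf_def by blast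
    then have 1: "A j i = cnj (A i j)" using ij by blast
    have "\<forall>i<m. \<forall>j<m. P j i = cnj (P i j)" using P unfolding psdf_def hermf_def by blast
    then have 2: "P j i = cnj (P i j)" using ij by blast
    show "A j i + P j i = cnj (A i j + P i j)" using 1 2 by simp
  qed
  fix x :: "nat \<Rightarrow> complex" assume "\<exists>i<m. x i \<noteq> 0"
  then have "0 < Re (Qf m A x)" using A unfolding pdf_def by blast
  moreover have "0 \<le> Re (Qf m P x)" using P unfolding psdf_def by blast
  ultimately show "0 < Re (Qf m (\<lambda>i j. A i j + P i j) x)" by (simp add: Qf_add)
qed

lemma mono_det:
  "pdf m A \<Longrightarrow> psdf m P \<Longrightarrow> Re (dm m A) \<le> Re (dm m (\<lambda>i j. A i j + P i j)) \<and>
    ((\<exists>i<m. \<exists>j<m. P i j \<noteq> 0) \<longrightarrow> Re (dm m A) < Re (dm m (\<lambda>i j. A i j + P i j)))"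
proof (induction m arbitrary: A P)
  case 0
  then show ?case by (simp add: dm0)
next
  case (Suc m)
  define C where "C = (\<lambda>i j. A i j + P i j)"
  have pA: "pdf (Suc m) A" using Suc.prems by blast
  have pP: "psdf (Suc m) P" using Suc.prems by blast
  have pC: "pdf (Suc m) C" unfolding C_def using pd_add_psd[OF pA pP] .
  have hA: "hermf (Suc m) A" using pA unfolding pdf_def by blast
  have hP: "hermf (Suc m) P" using pP unfolding psdf_def by blast
  have hC: "hermf (Suc m) C" using pC unfolding pdf_def by blast
  define al where "al = Re (A m m)"
  define pi where "pi = Re (P m m)"
  have al: "0 < al" unfolding al_def using pdf_pivot[OF pA] .
  have pi: "0 \<le> pi" unfolding pi_def using psdf_diag[OF pP] by simp
  have Am: "A m m = of_real al" unfolding al_def using herm_diag_real[OF hA] by simp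
  have Pm: "P m m = of_real pi" unfolding pi_def using herm_diag_real[OF hP] by simp
  have Cm: "C m m = of_real (al + pi)" unfolding C_def using Am Pm by simp
  have Cm0: "C m m \<noteq> 0"
  proof -
    have "al + pi \<noteq> 0" using al pi by simp
    then show ?thesis using Cm by (metis of_real_eq_0_iff)
  qed
  have Am0: "A m m \<noteq> 0" using Am al by simp
  define R where "R = (\<lambda>i j. sc m C i j - sc m A i j)"
  have hR: "hermf m R" unfolding hermf_def
  proof (intro allI impI)
    fix i j assume ij: "i < m" "j < m"
    have "\<forall>i<m. \<forall>j<m. sc m A j i = cnj (sc m A i j)" using sc_herm[OF hA] by (simp only: hermf_def)
    then have 1: "sc m A j i = cnj (sc m A i j)" using ij by blast
    have "\<forall>i<m. \<forall>j<m. sc m C j i = cnj (sc m C i j)" using sc_herm[OF hC] by (simp only: hermf_def)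
    then have 2: "sc m C j i = cnj (sc m C i j)" using ij by blast
    show "R j i = cnj (R i j)" unfolding R_def using 1 2 by simp
  qed
  have pR: "psdf m R" unfolding psdf_def
  proof (intro conjI allI)
    show "hermf m R" by (rule hR)
    fix x :: "nat \<Rightarrow> complex"
    obtain t :: complex where t: "Qf (Suc m) C (x(m:=t)) = Qf m (sc m C) x" using Q_opt[OF hC Cm0] by blast
    have "Qf (Suc m) C (x(m:=t)) = Qf (Suc m) A (x(m:=t)) + Qf (Suc m) P (x(m:=t))"
      unfolding C_def by (rule Qf_add)
    moreover have "0 \<le> Re (Qf (Suc m) P (x(m:=t)))" using pP unfolding psdf_def by blast
    moreover have "Re (Qf m (sc m A) x) \<le> Re (Qf (Suc m) A (x(m:=t)))"
      using sc_min[OF hA] pdf_pivot[OF pA] by blast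
    moreover have "Qf m R x = Qf m (sc m C) x - Qf m (sc m A) x" unfolding R_def by (rule Qf_diff)
    ultimately show "0 \<le> Re (Qf m R x)" using t by simp
  qed
  have IH: "Re (dm m (sc m A)) \<le> Re (dm m (\<lambda>i j. sc m A i j + R i j)) \<and>
    ((\<exists>i<m. \<exists>j<m. R i j \<noteq> 0) \<longrightarrow> Re (dm m (sc m A)) < Re (dm m (\<lambda>i j. sc m A i j + R i j)))"
    using Suc.IH[OF sc_pd[OF pA] pR] .
  have eqf: "(\<lambda>i j. sc m A i j + R i j) = sc m C" unfolding R_def by (simp add: fun_eq_iff)
  obtain r1 where r1: "r1 > 0" "dm m (sc m A) = of_real r1" using det_pos[OF sc_pd[OF pA]] by blast
  obtain r2 where r2: "r2 > 0" "dm m (sc m C) = of_real r2" using det_pos[OF sc_pd[OF pC]] by blast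
  have r12: "r1 \<le> r2" using IH r1 r2 eqf by simp
  have dA: "dm (Suc m) A = of_real (al * r1)" using dm_schur[of A m] Am0 Am r1 by simp
  have dC: "dm (Suc m) C = of_real ((al + pi) * r2)" using dm_schur[of C m] Cm0 Cm r2 by simp
  have weak: "al * r1 \<le> (al + pi) * r2" using al pi r1 r12 by (intro mult_mono) auto
  have strict: "al * r1 < (al + pi) * r2" if ex: "\<exists>i<Suc m. \<exists>j<Suc m. P i j \<noteq> 0"
  proof (cases "pi > 0")
    case True
    have "al * r1 \<le> al * r2" using al r12 by simp
    also have "\<dots> < (al + pi) * r2" using True r2 by simp
    finally show ?thesis .
  next
    case False
    then have pi0: "pi = 0" using pi by simp
    then have Pmm: "P m m = 0" using Pm by simp
    have col: "P i m = 0" if "i < Suc m" for i using psd_zero_col[OF pP _ Pmm that] by simp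
    have row: "P m j = 0" if "j < Suc m" for j
    proof -
      have "\<forall>i<Suc m. \<forall>j<Suc m. P j i = cnj (P i j)" using hP by (simp only: hermf_def)
      then have "P m j = cnj (P j m)" using that by blast
      then show ?thesis using col[OF that] by simp
    qed
    obtain i j where ij: "i < Suc m" "j < Suc m" "P i j \<noteq> 0" using ex by blast
    have im: "i < m" using ij row by (metis less_Suc_eq)
    have jm: "j < m" using ij col by (metis less_Suc_eq)
    have "R i j = P i j" unfolding R_def sc_def C_def using col[of i] row[of j] Pmm im jm by simp
    then have "r1 < r2" using IH r1 r2 eqf ij im jm by auto
    then show ?thesis using al pi0 by simp
  qed
  show ?case using weak strict dA dC unfolding C_def by simp
qed

lemma Qf_avg: "Qf m (\<lambda>i j. (A i j + B i j) / 2) x = (Qf m A x + Qf m B x) / 2"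
proof -
  have "(\<lambda>i j. (A i j + B i j) / 2) = (\<lambda>i j. (1/2) * (\<lambda>i j. A i j + B i j) i j)" by (simp add: fun_eq_iff)
  then have "Qf m (\<lambda>i j. (A i j + B i j) / 2) x = (1/2) * Qf m (\<lambda>i j. A i j + B i j) x"
    using Qf_scale[of m "1/2" "\<lambda>i j. A i j + B i j" x] by simp
  then show ?thesis by (simp add: Qf_add)
qed

lemma herm_inst: "hermf m F \<Longrightarrow> i < m \<Longrightarrow> j < m \<Longrightarrow> F j i = cnj (F i j)"
  unfolding hermf_def by blast

lemma pd_avg:
  assumes A: "pdf m A" and B: "pdf m B"
  shows "pdf m (\<lambda>i j. (A i j + B i j) / 2)"
  unfolding pdf_def
proof (intro conjI allI impI)
  have hA: "hermf m A" and hB: "hermf m B" using A B unfolding pdf_def by blast+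
  show "hermf m (\<lambda>i j. (A i j + B i j) / 2)" unfolding hermf_def
  proof (intro allI impI)
    fix i j assume ij: "i < m" "j < m"
    show "(A j i + B j i) / 2 = cnj ((A i j + B i j) / 2)"
      using herm_inst[OF hA ij] herm_inst[OF hB ij] by simp
  qed
  fix x :: "nat \<Rightarrow> complex" assume "\<exists>i<m. x i \<noteq> 0"
  then have "0 < Re (Qf m A x)" "0 < Re (Qf m B x)" using A B unfolding pdf_def by blast+
  then show "0 < Re (Qf m (\<lambda>i j. (A i j + B i j) / 2) x)" by (simp add: Qf_avg)
qed

lemma avg_det:
  "pdf m A \<Longrightarrow> pdf m B \<Longrightarrow>
    Re (dm m A) * Re (dm m B) \<le> (Re (dm m (\<lambda>i j. (A i j + B i j) / 2)))^2 \<and>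
    (Re (dm m A) * Re (dm m B) = (Re (dm m (\<lambda>i j. (A i j + B i j) / 2)))^2 \<longrightarrow>
       (\<forall>i<m. \<forall>j<m. A i j = B i j))"
proof (induction m arbitrary: A B)
  case 0
  then show ?case by (simp add: dm0)
next
  case (Suc m)
  define H where "H = (\<lambda>i j. (A i j + B i j) / 2)"
  have pA: "pdf (Suc m) A" and pB: "pdf (Suc m) B" using Suc.prems by blast+
  have pH: "pdf (Suc m) H" unfolding H_def using pd_avg[OF pA pB] .
  have hA: "hermf (Suc m) A" using pA unfolding pdf_def by blast
  have hB: "hermf (Suc m) B" using pB unfolding pdf_def by blast
  have hH: "hermf (Suc m) H" using pH unfolding pdf_def by blast
  define a where "a = Re (A m m)"
  define b where "b = Re (B m m)"
  have a: "0 < a" unfolding a_def using pdf_pivot[OF pA] .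
  have b: "0 < b" unfolding b_def using pdf_pivot[OF pB] .
  have Am: "A m m = of_real a" unfolding a_def using herm_diag_real[OF hA] by simp
  have Bm: "B m m = of_real b" unfolding b_def using herm_diag_real[OF hB] by simp
  have Hm: "H m m = of_real ((a + b) / 2)" unfolding H_def using Am Bm by simp
  have Am0: "A m m \<noteq> 0" using Am a by simp
  have Bm0: "B m m \<noteq> 0" using Bm b by simp
  have Hm0: "H m m \<noteq> 0"
  proof -
    have "(a + b) / 2 \<noteq> 0" using a b by simp
    then show ?thesis using Hm by (metis of_real_eq_0_iff)
  qed
  define X where "X = (\<lambda>i j. (sc m A i j + sc m B i j) / 2)"
  have pX: "pdf m X" unfolding X_def using pd_avg[OF sc_pd[OF pA] sc_pd[OF pB]] .
  have hX: "hermf m X" using pX unfolding pdf_def by blast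
  define R where "R = (\<lambda>i j. sc m H i j - X i j)"
  have hR: "hermf m R" unfolding hermf_def
  proof (intro allI impI)
    fix i j assume ij: "i < m" "j < m"
    show "R j i = cnj (R i j)" unfolding R_def
      using herm_inst[OF sc_herm[OF hH] ij] herm_inst[OF hX ij] by simp
  qed
  have pR: "psdf m R" unfolding psdf_def
  proof (intro conjI allI)
    show "hermf m R" by (rule hR)
    fix x :: "nat \<Rightarrow> complex"
    obtain t :: complex where t: "Qf (Suc m) H (x(m:=t)) = Qf m (sc m H) x" using Q_opt[OF hH Hm0] by blast
    have "Qf (Suc m) H (x(m:=t)) = (Qf (Suc m) A (x(m:=t)) + Qf (Suc m) B (x(m:=t))) / 2"
      unfolding H_def by (rule Qf_avg)
    moreover have "Re (Qf m (sc m A) x) \<le> Re (Qf (Suc m) A (x(m:=t)))"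
      using sc_min[OF hA] pdf_pivot[OF pA] by blast
    moreover have "Re (Qf m (sc m B) x) \<le> Re (Qf (Suc m) B (x(m:=t)))"
      using sc_min[OF hB] pdf_pivot[OF pB] by blast
    moreover have "Qf m X x = (Qf m (sc m A) x + Qf m (sc m B) x) / 2" unfolding X_def by (rule Qf_avg)
    moreover have "Qf m R x = Qf m (sc m H) x - Qf m X x" unfolding R_def by (rule Qf_diff)
    ultimately have "Re (Qf m (sc m H) x) = (Re (Qf (Suc m) A (x(m:=t))) + Re (Qf (Suc m) B (x(m:=t)))) / 2"
       "Re (Qf m X x) = (Re (Qf m (sc m A) x) + Re (Qf m (sc m B) x)) / 2"
       "Re (Qf m R x) = Re (Qf m (sc m H) x) - Re (Qf m X x)"
       "Re (Qf m (sc m A) x) \<le> Re (Qf (Suc m) A (x(m:=t)))"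
       "Re (Qf m (sc m B) x) \<le> Re (Qf (Suc m) B (x(m:=t)))"
      using t by (simp_all only: Re_divide_numeral plus_complex.sel minus_complex.sel)
    then have "Re (Qf m R x) = (Re (Qf (Suc m) A (x(m:=t))) - Re (Qf m (sc m A) x)) / 2 + (Re (Qf (Suc m) B (x(m:=t))) - Re (Qf m (sc m B) x)) / 2"
      "Re (Qf m (sc m A) x) \<le> Re (Qf (Suc m) A (x(m:=t)))"
      "Re (Qf m (sc m B) x) \<le> Re (Qf (Suc m) B (x(m:=t)))"
      by (simp_all add: field_simps)
    then show "0 \<le> Re (Qf m R x)" by (simp only:) (intro add_nonneg_nonneg divide_nonneg_pos; simp)
  qed
  have M: "Re (dm m X) \<le> Re (dm m (\<lambda>i j. X i j + R i j)) \<and>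
    ((\<exists>i<m. \<exists>j<m. R i j \<noteq> 0) \<longrightarrow> Re (dm m X) < Re (dm m (\<lambda>i j. X i j + R i j)))"
    using mono_det[OF pX pR] .
  have eqf: "(\<lambda>i j. X i j + R i j) = sc m H" unfolding R_def by (simp add: fun_eq_iff)
  have IH: "Re (dm m (sc m A)) * Re (dm m (sc m B)) \<le> (Re (dm m X))^2 \<and>
    (Re (dm m (sc m A)) * Re (dm m (sc m B)) = (Re (dm m X))^2 \<longrightarrow>
       (\<forall>i<m. \<forall>j<m. sc m A i j = sc m B i j))"
    unfolding X_def using Suc.IH[OF sc_pd[OF pA] sc_pd[OF pB]] .
  obtain rA where rA: "rA > 0" "dm m (sc m A) = of_real rA" using det_pos[OF sc_pd[OF pA]] by blast
  obtain rB where rB: "rB > 0" "dm m (sc m B) = of_real rB" using det_pos[OF sc_pd[OF pB]] by blast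
  obtain rX where rX: "rX > 0" "dm m X = of_real rX" using det_pos[OF pX] by blast
  obtain rH where rH: "rH > 0" "dm m (sc m H) = of_real rH" using det_pos[OF sc_pd[OF pH]] by blast
  have dA: "dm (Suc m) A = of_real (a * rA)" using dm_schur[of A m] Am0 Am rA by simp
  have dB: "dm (Suc m) B = of_real (b * rB)" using dm_schur[of B m] Bm0 Bm rB by simp
  have dH: "dm (Suc m) H = of_real ((a + b) / 2 * rH)" using dm_schur[of H m] Hm0 Hm rH by simp
  have i1: "rA * rB \<le> rX^2" using IH rA rB rX by simp
  have i2: "rX \<le> rH" using M eqf rX rH by simp
  have ab: "a * b \<le> ((a + b) / 2)^2"
  proof -
    have "((a + b) / 2)^2 - a * b = ((a - b) / 2)^2" by (simp add: power2_eq_square field_simps)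
    then show ?thesis by (smt (verit) zero_le_power2)
  qed
  define h where "h = ((a + b) / 2)^2"
  have h: "0 < h" unfolding h_def using a b by simp
  have c1: "a * b * (rA * rB) \<le> h * (rA * rB)" using ab rA rB unfolding h_def by simp
  have c2: "h * (rA * rB) \<le> h * rX^2" using i1 h by simp
  have c3: "h * rX^2 \<le> h * rH^2" using i2 rX h by (simp add: power_mono)
  have goal_eq: "Re (dm (Suc m) A) * Re (dm (Suc m) B) = a * b * (rA * rB)"
    using dA dB by (simp add: algebra_simps)
  have goal_eqH: "(Re (dm (Suc m) H))^2 = h * rH^2"
    unfolding h_def by (simp only: dH Re_complex_of_real power_mult_distrib)
  have weak: "Re (dm (Suc m) A) * Re (dm (Suc m) B) \<le> (Re (dm (Suc m) H))^2"
    using c1 c2 c3 goal_eq goal_eqH by linarith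
  have eqcase: "\<forall>i<Suc m. \<forall>j<Suc m. A i j = B i j"
    if eq: "Re (dm (Suc m) A) * Re (dm (Suc m) B) = (Re (dm (Suc m) H))^2"
  proof -
    have e1: "a * b * (rA * rB) = h * (rA * rB)" and e2: "h * (rA * rB) = h * rX^2" and e3: "h * rX^2 = h * rH^2"
      using c1 c2 c3 goal_eq goal_eqH eq by linarith+
    have "a * b = h" using e1 rA rB by simp
    then have "((a - b) / 2)^2 = 0" unfolding h_def by (simp add: power2_eq_square field_simps)
    then have ab_eq: "a = b" by simp
    have scAB: "\<forall>i<m. \<forall>j<m. sc m A i j = sc m B i j" using IH e2 h rA rB rX by simp
    have "rX^2 = rH^2" using e3 h by simp
    then have "rX = rH" using rX rH by (simp add: power2_eq_iff)
    then have R0: "R i j = 0" if "i < m" "j < m" for i j using M eqf rX rH that by auto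
    have hAi: "A m i = cnj (A i m)" if "i < Suc m" for i using herm_inst[OF hA that, of m] by simp
    have hBi: "B m i = cnj (B i m)" if "i < Suc m" for i using herm_inst[OF hB that, of m] by simp
    have colE: "A i m = B i m" if i: "i < m" for i
    proof -
      have "4 * of_real a * R i i = (A i m - B i m) * cnj (A i m - B i m)"
        using R0 hAi[of i] hBi[of i] i Am Bm ab_eq a
        unfolding R_def sc_def X_def H_def
        by (simp add: field_simps)
      then have "(A i m - B i m) * cnj (A i m - B i m) = 0" using R0[OF i i] by simp
      then show ?thesis by simp
    qed
    show ?thesis
    proof (intro allI impI)
      fix i j assume i: "i < Suc m" and j: "j < Suc m"
      show "A i j = B i j"
      proof (cases "i < m \<and> j < m")
        case True
        have "A i j = sc m A i j + A i m * A m j / A m m" unfolding sc_def by simp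
        moreover have "B i j = sc m B i j + B i m * B m j / B m m" unfolding sc_def by simp
        moreover have "A m j = B m j" using hAi[of j] hBi[of j] colE[of j] True by simp
        ultimately show ?thesis using scAB colE[of i] True Am Bm ab_eq by simp
      next
        case False
        then have "i = m \<or> j = m" using i j by auto
        then show ?thesis
        proof
          assume im: "i = m"
          show ?thesis
          proof (cases "j = m")
            case True then show ?thesis using im Am Bm ab_eq by simp
          next
            case False then have "j < m" using j by simp
            then show ?thesis using im hAi[of j] hBi[of j] colE[of j] by simp
          qed
        next
          assume jm: "j = m"
          show ?thesis
          proof (cases "i = m")
            case True then show ?thesis using jm Am Bm ab_eq by simp
          next
            case False then have "i < m" using i by simp
            then show ?thesis using jm colE[of i] by simp
          qed
        qed
      qed
    qed
  qed
  show ?case using weak eqcase unfolding H_def by blast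
qed

definition fM :: "complex mat \<Rightarrow> nat \<Rightarrow> nat \<Rightarrow> complex" where
  "fM M = (\<lambda>i j. M $$ (i, j))"

lemma det_fM: "M \<in> carrier_mat n n \<Longrightarrow> det M = dm n (fM M)"
  unfolding dm_def fM_def by (rule arg_cong[of _ _ det], rule eq_matI, auto)

lemma qform_fM: "qform {0..<n} M x = Qf n (fM M) x"
  unfolding qform_def Qf_def fM_def by (simp add: atLeast0LessThan)

lemma ball_range: "(\<forall>i\<in>{0..<(n::nat)}. P i) = (\<forall>i<n. P i)" by auto
lemma bex_range: "(\<exists>i\<in>{0..<(n::nat)}. P i) = (\<exists>i<n. P i)" by auto

lemma herm_fM: "hermitian_on {0..<n} M \<longleftrightarrow> hermf n (fM M)"
  unfolding hermitian_on_def hermf_def fM_def by (simp only: ball_range)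

lemma pd_mat_fM: "pd_mat n M \<longleftrightarrow> M \<in> carrier_mat n n \<and> pdf n (fM M)"
  unfolding pd_mat_def pd_on_def pdf_def herm_fM qform_fM by (simp only: bex_range)

lemma psd_mat_fM: "psd_mat n M \<longleftrightarrow> M \<in> carrier_mat n n \<and> psdf n (fM M)"
  unfolding psd_mat_def psd_on_def psdf_def herm_fM qform_fM by blast

lemma hermf_cong: "(\<And>i j. i < m \<Longrightarrow> j < m \<Longrightarrow> F i j = G i j) \<Longrightarrow> hermf m F = hermf m G"
  unfolding hermf_def by (metis (no_types, lifting))

lemma pdf_cong: "(\<And>i j. i < m \<Longrightarrow> j < m \<Longrightarrow> F i j = G i j) \<Longrightarrow> pdf m F = pdf m G"
  unfolding pdf_def using hermf_cong[of m F G] Qf_congF[of m F G] by simp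

lemma psdf_cong: "(\<And>i j. i < m \<Longrightarrow> j < m \<Longrightarrow> F i j = G i j) \<Longrightarrow> psdf m F = psdf m G"
  unfolding psdf_def using hermf_cong[of m F G] Qf_congF[of m F G] by simp

lemma graph_E: "graph_on n E \<Longrightarrow> (i, j) \<in> E \<Longrightarrow> i < n \<and> j < n"
  unfolding graph_on_def by auto

lemma unique_maxdet:
  assumes g: "graph_on n E" and m1: "is_maxdet_completion n E A M1" and m2: "is_maxdet_completion n E A M2"
  shows "M1 = M2"
proof -
  have c1: "M1 \<in> carrier_mat n n" and c2: "M2 \<in> carrier_mat n n"
    using m1 m2 unfolding is_maxdet_completion_def is_completion_def by auto
  have p1: "pdf n (fM M1)" and p2: "pdf n (fM M2)"
    using m1 m2 unfolding is_maxdet_completion_def pd_mat_fM by auto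
  define H where "H = Matrix.mat n n (\<lambda>(i,j). (M1 $$ (i,j) + M2 $$ (i,j)) / 2)"
  have cH: "H \<in> carrier_mat n n" unfolding H_def by simp
  have fH: "fM H i j = (fM M1 i j + fM M2 i j) / 2" if "i < n" "j < n" for i j
    unfolding H_def fM_def using that by simp
  have pH: "pdf n (fM H)"
    using pd_avg[OF p1 p2] pdf_cong[of n "fM H" "\<lambda>i j. (fM M1 i j + fM M2 i j) / 2"] fH by simp
  have compH: "is_completion n E A H" unfolding is_completion_def
  proof (intro conjI cH ballI)
    fix ij assume ij: "ij \<in> E"
    obtain i j where ijp: "ij = (i, j)" by (cases ij)
    have ij': "i < n" "j < n" using graph_E[OF g] ij ijp by auto
    have "M1 $$ (i,j) = A $$ (i,j)" "M2 $$ (i,j) = A $$ (i,j)"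
      using m1 m2 ij ijp unfolding is_maxdet_completion_def is_completion_def by auto
    then show "case ij of (i, j) \<Rightarrow> H $$ (i, j) = A $$ (i, j)" using ijp ij' unfolding H_def by simp
  qed
  have pdH: "pd_mat n H" unfolding pd_mat_fM using cH pH by simp
  have le1: "Re (det H) \<le> Re (det M1)" using m1 compH pdH unfolding is_maxdet_completion_def by blast
  have le12: "Re (det M2) \<le> Re (det M1)" using m1 m2 unfolding is_maxdet_completion_def by blast
  have le21: "Re (det M1) \<le> Re (det M2)" using m1 m2 unfolding is_maxdet_completion_def by blast
  have dH: "det H = dm n (\<lambda>i j. (fM M1 i j + fM M2 i j) / 2)"
    using det_fM[OF cH] dm_cong[of n "fM H" "\<lambda>i j. (fM M1 i j + fM M2 i j) / 2"] fH by simp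
  have AV: "Re (dm n (fM M1)) * Re (dm n (fM M2)) \<le> (Re (dm n (\<lambda>i j. (fM M1 i j + fM M2 i j) / 2)))^2 \<and>
    (Re (dm n (fM M1)) * Re (dm n (fM M2)) = (Re (dm n (\<lambda>i j. (fM M1 i j + fM M2 i j) / 2)))^2 \<longrightarrow>
       (\<forall>i<n. \<forall>j<n. fM M1 i j = fM M2 i j))" using avg_det[OF p1 p2] .
  obtain r1 where r1: "r1 > 0" "dm n (fM M1) = of_real r1" using det_pos[OF p1] by blast
  obtain rH where rH: "rH > 0" "dm n (fM H) = of_real rH" using det_pos[OF pH] by blast
  have d1: "Re (det M1) = r1" using det_fM[OF c1] r1 by simp
  have d2: "Re (det M2) = r1" using d1 le12 le21 by simp
  have dHr: "Re (det H) = rH" using det_fM[OF cH] rH by simp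
  have "r1 * r1 \<le> rH^2" using AV dH d1 d2 dHr det_fM[OF c1] det_fM[OF c2] by simp
  moreover have "rH \<le> r1" using le1 d1 dHr by simp
  ultimately have "r1 * r1 = rH^2"
    using rH r1 by (smt (verit) mult_mono power2_eq_square)
  then have "\<forall>i<n. \<forall>j<n. fM M1 i j = fM M2 i j" using AV dH d1 d2 dHr det_fM[OF c1] det_fM[OF c2] by simp
  then show ?thesis using c1 c2 unfolding fM_def by (intro eq_matI) auto
qed

lemma quad_bound:
  fixes a d :: real and b :: complex
  assumes Q: "\<And>x y. 0 \<le> Re (cnj x * of_real a * x + cnj x * b * y + cnj y * cnj b * x + cnj y * of_real d * y)"
  shows "norm b \<le> (a + d) / 2"
proof -
  have a0: "0 \<le> a" using Q[of 1 0] by simp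
  have d0: "0 \<le> d" using Q[of 0 1] by simp
  show ?thesis
  proof (cases "b = 0")
    case True then show ?thesis using a0 d0 by simp
  next
    case False
    define s where "s = (Re b)^2 + (Im b)^2"
    have nb: "norm b = sqrt s" unfolding s_def by (simp add: cmod_def)
    have spos: "0 < s" unfolding s_def using False by (simp add: complex_eq_iff sum_power2_gt_zero_iff)
    have nb2: "(sqrt s)^2 = s" using spos by simp
    have "Re (cnj (of_real (sqrt s)) * of_real a * of_real (sqrt s) + cnj (of_real (sqrt s)) * b * (- cnj b)
      + cnj (- cnj b) * cnj b * of_real (sqrt s) + cnj (- cnj b) * of_real d * (- cnj b))
      = (sqrt s)^2 * a - 2 * sqrt s * s + d * s"
      unfolding s_def by (simp add: algebra_simps power2_eq_square)
    then have "0 \<le> s * a - 2 * sqrt s * s + d * s" using Q[of "of_real (sqrt s)" "- cnj b"] nb2 by simp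
    then have "0 \<le> s * (a + d - 2 * sqrt s)" by (simp add: algebra_simps)
    then have "0 \<le> a + d - 2 * sqrt s" using spos by (simp add: zero_le_mult_iff)
    then show ?thesis using nb by simp
  qed
qed

lemma psd_entry_bound:
  assumes P: "psdf m F" and i: "i < m" and j: "j < m"
  shows "norm (F i j) \<le> (Re (F i i) + Re (F j j)) / 2"
proof -
  have h: "hermf m F" using P unfolding psdf_def by blast
  define ai where "ai = Re (F i i)"
  define aj where "aj = Re (F j j)"
  have Fii: "F i i = of_real ai" unfolding ai_def using herm_diag_real[OF h i] .
  have Fjj: "F j j = of_real aj" unfolding aj_def using herm_diag_real[OF h j] .
  have ai0: "0 \<le> ai" unfolding ai_def using psdf_diag[OF P i] .
  show ?thesis
  proof (cases "i = j")
    case True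
    then have "norm (F i j) = ai" using Fii ai0 by simp
    then show ?thesis using True unfolding ai_def by simp
  next
    case False
    have Fji: "F j i = cnj (F i j)" using herm_inst[OF h i j] .
    have "norm (F i j) \<le> (ai + aj) / 2"
    proof (rule quad_bound)
      fix x y :: complex
      define z where "z = (\<lambda>l. if l = i then x else if l = j then y else 0)"
      have "Qf m F z = cnj (z i) * F i i * z i + cnj (z i) * F i j * z j + cnj (z j) * F j i * z i + cnj (z j) * F j j * z j"
        using False i j by (intro Qf_two) (auto simp: z_def)
      also have "\<dots> = cnj x * of_real ai * x + cnj x * F i j * y + cnj y * cnj (F i j) * x + cnj y * of_real aj * y"
        using False unfolding z_def Fji Fii Fjj by simp
      finally have e: "Qf m F z = cnj x * of_real ai * x + cnj x * F i j * y + cnj y * cnj (F i j) * x + cnj y * of_real aj * y" .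
      have "0 \<le> Re (Qf m F z)" using P unfolding psdf_def by blast
      then show "0 \<le> Re (cnj x * of_real ai * x + cnj x * F i j * y + cnj y * cnj (F i j) * x + cnj y * of_real aj * y)"
        using e by simp
    qed
    then show ?thesis unfolding ai_def aj_def .
  qed
qed

lemma quad_zero:
  fixes S q :: real
  assumes key: "\<And>t. 0 \<le> 2 * t * S + t^2 * q" and S0: "0 \<le> S"
  shows "S = 0"
proof (rule ccontr)
  assume "S \<noteq> 0"
  then have Sp: "0 < S" using S0 by simp
  define c where "c = \<bar>q\<bar> + 1"
  have c: "0 < c" unfolding c_def by simp
  define t where "t = - S / c"
  have "2 * t * S + t^2 * q = (- 2 * S^2 * c + S^2 * q) / c^2"
    unfolding t_def using c by (simp add: field_simps power2_eq_square)
  also have "- 2 * S^2 * c + S^2 * q \<le> - 2 * S^2 * c + S^2 * \<bar>q\<bar>"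
    using Sp by (simp add: mult_left_mono)
  then have "- 2 * S^2 * c + S^2 * q < 0"
  proof -
    have "- 2 * S^2 * c + S^2 * \<bar>q\<bar> = - (S^2 * (\<bar>q\<bar> + 2))" unfolding c_def by (simp add: algebra_simps)
    also have "\<dots> < 0" using Sp by (simp add: mult_pos_pos)
    finally show ?thesis using \<open>- 2 * S^2 * c + S^2 * q \<le> - 2 * S^2 * c + S^2 * \<bar>q\<bar>\<close> by simp
  qed
  then have "(- 2 * S^2 * c + S^2 * q) / c^2 < 0" using c by (simp add: divide_neg_pos)
  finally show False using key[of t] by simp
qed

lemma Qf_lin:
  "Qf m F (\<lambda>i. x i + complex_of_real t * y i) = Qf m F x
    + complex_of_real t * ((\<Sum>i<m. \<Sum>j<m. cnj (x i) * F i j * y j) + (\<Sum>i<m. \<Sum>j<m. cnj (y i) * F i j * x j))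
    + complex_of_real (t^2) * Qf m F y"
proof -
  have e: "cnj (x i + complex_of_real t * y i) * F i j * (x j + complex_of_real t * y j)
    = cnj (x i) * F i j * x j + complex_of_real t * (cnj (x i) * F i j * y j + cnj (y i) * F i j * x j)
      + complex_of_real (t^2) * (cnj (y i) * F i j * y j)" for i j
    by (simp add: algebra_simps power2_eq_square)
  show ?thesis unfolding Qf_def e by (simp add: sum.distrib sum_distrib_left distrib_left)
qed

lemma psd_det_pd:
  assumes P: "psdf m F" and d: "dm m F \<noteq> 0"
  shows "pdf m F"
  unfolding pdf_def
proof (intro conjI allI impI)
  show h: "hermf m F" using P unfolding psdf_def by blast
  fix x :: "nat \<Rightarrow> complex" assume ex: "\<exists>i<m. x i \<noteq> 0"
  show "0 < Re (Qf m F x)"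
  proof (rule ccontr)
    assume "\<not> 0 < Re (Qf m F x)"
    moreover have "0 \<le> Re (Qf m F x)" using P unfolding psdf_def by blast
    ultimately have q0: "Re (Qf m F x) = 0" by simp
    define w where "w i = (\<Sum>j<m. F i j * x j)" for i
    define S where "S = (\<Sum>i<m. (norm (w i))^2)"
    have b1: "(\<Sum>i<m. \<Sum>j<m. cnj (x i) * F i j * w j) = (\<Sum>j<m. cnj (w j) * w j)"
    proof -
      have "(\<Sum>i<m. \<Sum>j<m. cnj (x i) * F i j * w j) = (\<Sum>j<m. \<Sum>i<m. cnj (x i) * F i j * w j)"
        by (rule sum.swap)
      also have "\<dots> = (\<Sum>j<m. (\<Sum>i<m. cnj (x i) * F i j) * w j)" by (simp add: sum_distrib_right)
      also have "\<dots> = (\<Sum>j<m. cnj (w j) * w j)"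
      proof (intro sum.cong refl)
        fix j assume j: "j \<in> {..<m}"
        have "cnj (w j) = (\<Sum>i<m. cnj (x i) * F i j)"
          unfolding w_def using herm_inst[OF h _ j[simplified]] by (auto intro!: sum.cong simp: mult.commute)
        then show "(\<Sum>i<m. cnj (x i) * F i j) * w j = cnj (w j) * w j" by simp
      qed
      finally show ?thesis .
    qed
    have b2: "(\<Sum>i<m. \<Sum>j<m. cnj (w i) * F i j * x j) = (\<Sum>i<m. cnj (w i) * w i)"
      unfolding w_def by (simp add: sum_distrib_left mult.assoc)
    have reS: "Re ((\<Sum>j<m. cnj (w j) * w j) + (\<Sum>i<m. cnj (w i) * w i)) = 2 * S"
      unfolding S_def by (simp add: cnj_mult_self)
    have key: "0 \<le> 2 * t * S + t^2 * Re (Qf m F w)" for t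
    proof -
      have "0 \<le> Re (Qf m F (\<lambda>i. x i + complex_of_real t * w i))" using P unfolding psdf_def by blast
      also have "Re (Qf m F (\<lambda>i. x i + complex_of_real t * w i)) = 2 * t * S + t^2 * Re (Qf m F w)"
        unfolding Qf_lin b1 b2 using q0 reS by simp
      finally show ?thesis .
    qed
    have "S = 0" by (rule quad_zero[OF key]) (simp add: S_def sum_nonneg)
    then have w0: "\<forall>i<m. w i = 0" unfolding S_def by (simp add: sum_nonneg_eq_0_iff)
    define X where "X = Matrix.mat m m (\<lambda>(i,j). F i j)"
    have cX: "X \<in> carrier_mat m m" unfolding X_def by simp
    have "X *\<^sub>v Matrix.vec m x = 0\<^sub>v m"
    proof (rule eq_vecI)
      fix i assume "i < dim_vec (0\<^sub>v m :: complex Matrix.vec)"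
      then have i: "i < m" by simp
      have "(X *\<^sub>v Matrix.vec m x) $ i = w i"
        unfolding X_def w_def using i by (simp add: scalar_prod_def atLeast0LessThan)
      then show "(X *\<^sub>v Matrix.vec m x) $ i = 0\<^sub>v m $ i" using w0 i by simp
    qed (simp add: X_def)
    moreover have "Matrix.vec m x \<noteq> 0\<^sub>v m"
    proof
      assume "Matrix.vec m x = 0\<^sub>v m"
      then have "\<forall>i<m. x i = 0" by (metis index_vec index_zero_vec(1))
      then show False using ex by blast
    qed
    ultimately have "det X = 0" using det_0_iff_vec_prod_zero[OF cX] vec_carrier[of m x] by blast
    then show False using d unfolding dm_def X_def by simp
  qed
qed


lemma extract_subseq:
  fixes f :: "nat \<Rightarrow> 'i \<Rightarrow> complex"
  assumes "finite S" and "\<And>k c. c \<in> S \<Longrightarrow> norm (f k c) \<le> K"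
  shows "\<exists>r. strict_mono r \<and> (\<forall>c\<in>S. convergent (\<lambda>k. f (r k) c))"
  using assms
proof (induction S rule: finite_induct)
  case empty
  then show ?case by (intro exI[of _ id]) (auto simp: strict_mono_def)
next
  case (insert c S)
  obtain r where r: "strict_mono r" "\<forall>c\<in>S. convergent (\<lambda>k. f (r k) c)"
    using insert.IH insert.prems by blast
  have bk: "norm (f (r k) c) \<le> K" for k using insert.prems[of c "r k"] by simp
  have bd: "bounded (range (\<lambda>k. f (r k) c))"
    unfolding bounded_iff using bk by blast
  obtain l s where s: "strict_mono s" "((\<lambda>k. f (r k) c) \<circ> s) \<longlonglongrightarrow> l"
    using bounded_imp_convergent_subsequence[OF bd] by blast
  have "strict_mono (r \<circ> s)" using r s by (simp add: strict_mono_o)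
  moreover have "\<forall>c'\<in>insert c S. convergent (\<lambda>k. f ((r \<circ> s) k) c')"
  proof
    fix c' assume "c' \<in> insert c S"
    then show "convergent (\<lambda>k. f ((r \<circ> s) k) c')"
    proof
      assume "c' = c"
      then show ?thesis using s(2) unfolding convergent_def comp_def by blast
    next
      assume "c' \<in> S"
      then have "convergent (\<lambda>k. f (r k) c')" using r by blast
      then have "convergent ((\<lambda>k. f (r k) c') \<circ> s)" using s convergent_subseq_convergent by blast
      then show ?thesis by (simp add: comp_def)
    qed
  qed
  ultimately show ?case by blast
qed

lemma qform_scale_real:
  "qform C M (\<lambda>i. x i / complex_of_real c) = qform C M x / complex_of_real (c^2)"
  unfolding qform_def by (simp add: sum_divide_distrib power2_eq_square field_simps)

lemma qform_cong: "(\<And>i. i \<in> C \<Longrightarrow> x i = y i) \<Longrightarrow> qform C M x = qform C M y"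
  unfolding qform_def by (intro sum.cong refl) auto


lemma unif_pos:
  assumes fin: "finite C" and pd: "pd_on C M"
  shows "\<exists>e>0. \<forall>x. e * (\<Sum>i\<in>C. (norm (x i))^2) \<le> Re (qform C M x)"
proof (rule ccontr)
  assume "\<not> ?thesis"
  then have "\<forall>k. \<exists>x. Re (qform C M x) < inverse (real (Suc k)) * (\<Sum>i\<in>C. (norm (x i))^2)"
    by (metis not_le inverse_positive_iff_positive of_nat_0_less_iff zero_less_Suc)
  then obtain X where X: "\<And>k. Re (qform C M (X k)) < inverse (real (Suc k)) * (\<Sum>i\<in>C. (norm (X k i))^2)"
    by metis
  define s where "s k = (\<Sum>i\<in>C. (norm (X k i))^2)" for k
  have s0: "0 \<le> s k" for k unfolding s_def by (simp add: sum_nonneg)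
  have spos: "0 < s k" for k
  proof (rule ccontr)
    assume "\<not> 0 < s k"
    then have "s k = 0" using s0[of k] by simp
    then have "\<forall>i\<in>C. X k i = 0" unfolding s_def using fin by (simp add: sum_nonneg_eq_0_iff)
    then have "qform C M (X k) = qform C M (\<lambda>i. 0)" by (intro qform_cong) auto
    then have "qform C M (X k) = 0" by (simp add: qform_def)
    then show False using X[of k] \<open>s k = 0\<close> unfolding s_def by simp
  qed
  define Y where "Y k i = X k i / complex_of_real (sqrt (s k))" for k i
  have normY: "(\<Sum>i\<in>C. (norm (Y k i))^2) = 1" for k
  proof -
    have "(\<Sum>i\<in>C. (norm (Y k i))^2) = (\<Sum>i\<in>C. (norm (X k i))^2 / s k)"
      unfolding Y_def using s0[of k] by (intro sum.cong refl) (simp add: norm_divide power_divide)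
    also have "\<dots> = 1" using spos[of k] unfolding s_def by (simp add: sum_divide_distrib[symmetric])
    finally show ?thesis .
  qed
  have qY: "Re (qform C M (Y k)) < inverse (real (Suc k))" for k
  proof -
    have "qform C M (Y k) = qform C M (X k) / complex_of_real ((sqrt (s k))^2)"
      unfolding Y_def by (rule qform_scale_real)
    also have "(sqrt (s k))^2 = s k" using s0[of k] by simp
    finally have "Re (qform C M (Y k)) = Re (qform C M (X k)) / s k" by simp
    also have "\<dots> < inverse (real (Suc k))" using X[of k] spos[of k] unfolding s_def
      by (simp add: divide_less_eq)
    finally show ?thesis .
  qed
  have bY: "norm (Y k i) \<le> 1" if "i \<in> C" for k i
  proof -
    have "(norm (Y k i))^2 \<le> (\<Sum>i\<in>C. (norm (Y k i))^2)"
      using fin that by (intro member_le_sum) auto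
    then have "(norm (Y k i))^2 \<le> 1^2" using normY[of k] by simp
    then show ?thesis by (rule power2_le_imp_le) simp
  qed
  obtain r where r: "strict_mono r" "\<forall>i\<in>C. convergent (\<lambda>k. Y (r k) i)"
    using extract_subseq[OF fin, of Y 1] bY by blast
  define y where "y i = lim (\<lambda>k. Y (r k) i)" for i
  have ty: "(\<lambda>k. Y (r k) i) \<longlonglongrightarrow> y i" if "i \<in> C" for i
    using r that unfolding y_def by (simp add: convergent_LIMSEQ_iff)
  have t1: "(\<lambda>k. \<Sum>i\<in>C. (norm (Y (r k) i))^2) \<longlonglongrightarrow> (\<Sum>i\<in>C. (norm (y i))^2)"
    by (intro tendsto_intros ty) 
  then have n1: "(\<Sum>i\<in>C. (norm (y i))^2) = 1" using normY by (simp add: LIMSEQ_const_iff)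
  have t2: "(\<lambda>k. Re (qform C M (Y (r k)))) \<longlonglongrightarrow> Re (qform C M y)"
    unfolding qform_def by (intro tendsto_intros ty)
  have "Re (qform C M y) \<le> 0"
  proof (rule LIMSEQ_le[OF t2 LIMSEQ_inverse_real_of_nat])
    show "\<exists>N. \<forall>n\<ge>N. Re (qform C M (Y (r n))) \<le> inverse (real (Suc n))"
    proof (intro exI allI impI)
      fix n :: nat
      have "n \<le> r n" using seq_suble[OF r(1)] by blast
      then have "inverse (real (Suc (r n))) \<le> inverse (real (Suc n))" by (simp add: le_imp_inverse_le)
      then show "Re (qform C M (Y (r n))) \<le> inverse (real (Suc n))"
        using qY[of "r n"] by (meson less_imp_le order.strict_trans2)
    qed
  qed
  moreover have "\<exists>i\<in>C. y i \<noteq> 0"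
  proof (rule ccontr)
    assume "\<not> (\<exists>i\<in>C. y i \<noteq> 0)"
    then have "(\<Sum>i\<in>C. (norm (y i))^2) = 0" by simp
    then show False using n1 by simp
  qed
  then have "0 < Re (qform C M y)" using pd unfolding pd_on_def by blast
  ultimately show False by simp
qed

lemma finite_eps:
  assumes "finite S" "\<forall>C\<in>S. \<exists>e>0. P C e" "\<forall>C e e'. P C e \<longrightarrow> 0 < e' \<longrightarrow> e' \<le> e \<longrightarrow> P C e'"
  shows "\<exists>e>0. \<forall>C\<in>S. P C (e::real)"
  using assms
proof (induction S rule: finite_induct)
  case empty
  then show ?case by (intro exI[of _ 1]) auto
next
  case (insert C S)
  obtain e1 where e1: "e1 > 0" "\<forall>C\<in>S. P C e1" using insert by blast
  obtain e2 where e2: "e2 > 0" "P C e2" using insert.prems by blast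
  have mono: "\<forall>C e e'. P C e \<longrightarrow> 0 < e' \<longrightarrow> e' \<le> e \<longrightarrow> P C e'" using insert.prems by blast
  have m: "0 < min e1 e2" using e1 e2 by simp
  have "\<forall>C'\<in>insert C S. P C' (min e1 e2)"
  proof
    fix C' assume "C' \<in> insert C S"
    then show "P C' (min e1 e2)"
    proof
      assume "C' = C" then show ?thesis using mono e2 m by (metis min.cobounded2)
    next
      assume "C' \<in> S" then show ?thesis using mono e1 m by (metis min.cobounded1)
    qed
  qed
  then show ?case using m by blast
qed

lemma shift_entry:
  "A \<in> carrier_mat n n \<Longrightarrow> i < n \<Longrightarrow> j < n \<Longrightarrow>
   (A + (c::complex) \<cdot>\<^sub>m 1\<^sub>m n) $$ (i, j) = A $$ (i, j) + (if i = j then c else 0)"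
  by simp

lemma qform_shift:
  assumes C: "C \<subseteq> {0..<n}" and A: "A \<in> carrier_mat n n"
  shows "qform C (A + c \<cdot>\<^sub>m 1\<^sub>m n) x = qform C A x + c * (\<Sum>i\<in>C. cnj (x i) * x i)"
proof -
  have "qform C (A + c \<cdot>\<^sub>m 1\<^sub>m n) x = (\<Sum>i\<in>C. \<Sum>j\<in>C. cnj (x i) * A $$ (i, j) * x j + (if i = j then cnj (x i) * c * x j else 0))"
  proof -
    have Cn: "i \<in> C \<Longrightarrow> i < n" for i using C by auto
    show ?thesis unfolding qform_def using A by (intro sum.cong refl) (auto simp: Cn algebra_simps)
  qed
  also have "\<dots> = qform C A x + (\<Sum>i\<in>C. cnj (x i) * c * x i)"
  proof -
    have fC: "finite C" using C finite_subset by blast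
    show ?thesis unfolding qform_def using fC by (simp add: sum.distrib sum.delta sum.delta')
  qed
  finally show ?thesis by (simp add: sum_distrib_left algebra_simps)
qed

lemma herm_shift:
  assumes A: "A \<in> carrier_mat n n" and i: "i < n" and j: "j < n" and h: "A $$ (j, i) = cnj (A $$ (i, j))"
  shows "(A + complex_of_real c \<cdot>\<^sub>m 1\<^sub>m n) $$ (j, i) = cnj ((A + complex_of_real c \<cdot>\<^sub>m 1\<^sub>m n) $$ (i, j))"
  using A i j h by simp

lemma sum_norm_pos:
  assumes "finite C" "i \<in> C" "x i \<noteq> 0"
  shows "0 < (\<Sum>i\<in>C. (norm (x i))^2)"
proof -
  have "0 < (norm (x i))^2" using assms by simp
  also have "\<dots> \<le> (\<Sum>i\<in>C. (norm (x i))^2)" using assms by (intro member_le_sum) auto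
  finally show ?thesis .
qed

lemma Re_sum_cnj: "Re (\<Sum>i\<in>C. cnj (x i) * x i) = (\<Sum>i\<in>C. (norm (x i))^2)"
  by (simp add: cnj_mult_self)

lemma pd_completion_exists:
  assumes g: "graph_on n E" and c: "completable n E" and A: "partial_pd n E A"
  shows "\<exists>M. is_completion n E A M \<and> pd_mat n M"
proof -
  have cA: "A \<in> carrier_mat n n" and hE: "herm_on_edges E A" and cl: "\<forall>C. clique n E C \<longrightarrow> pd_on C A"
    using A unfolding partial_pd_def by auto
  let ?P = "\<lambda>C e. \<forall>x. e * (\<Sum>i\<in>C. (norm (x i))^2) \<le> Re (qform C A x)"
  have finCL: "finite {C. clique n E C}"
    by (rule finite_subset[of _ "Pow {0..<n}"]) (auto simp: clique_def)
  have ex: "\<forall>C\<in>{C. clique n E C}. \<exists>e>0. ?P C e"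
  proof
    fix C assume "C \<in> {C. clique n E C}"
    then have "clique n E C" by simp
    then have "finite C" "pd_on C A" using cl unfolding clique_def by (blast intro: finite_subset)+
    then show "\<exists>e>0. ?P C e" using unif_pos by blast
  qed
  have mono0: "?P C e'" if "?P C e" "0 < e'" "e' \<le> e" for C e e'
  proof
    fix x :: "nat \<Rightarrow> complex"
    have "e' * (\<Sum>i\<in>C. (norm (x i))^2) \<le> e * (\<Sum>i\<in>C. (norm (x i))^2)"
      using that by (intro mult_right_mono sum_nonneg) auto
    then show "e' * (\<Sum>i\<in>C. (norm (x i))^2) \<le> Re (qform C A x)" using that(1) by (meson order_trans)
  qed
  obtain e where e: "e > 0" "\<forall>C\<in>{C. clique n E C}. ?P C e"
  proof -
    have mono: "\<forall>C e e'. ?P C e \<longrightarrow> 0 < e' \<longrightarrow> e' \<le> e \<longrightarrow> ?P C e'"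
      using mono0 by blast
    show ?thesis using finite_eps[where P="?P", OF finCL ex mono] that by blast
  qed
  define A' where "A' = A + complex_of_real (- e) \<cdot>\<^sub>m 1\<^sub>m n"
  have cA': "A' \<in> carrier_mat n n" unfolding A'_def using cA by simp
  have "partial_psd n E A'" unfolding partial_psd_def
  proof (intro conjI allI impI cA')
    show "herm_on_edges E A'" unfolding herm_on_edges_def
    proof
      fix ij assume ij: "ij \<in> E"
      obtain i j where ijp: "ij = (i, j)" by (cases ij)
      have ij': "i < n" "j < n" using graph_E[OF g] ij ijp by auto
      have "A $$ (j, i) = cnj (A $$ (i, j))" using hE ij ijp unfolding herm_on_edges_def by auto
      then show "case ij of (i, j) \<Rightarrow> A' $$ (j, i) = cnj (A' $$ (i, j))"
        unfolding A'_def using ij' cA ijp by simp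
    qed
    fix C assume C: "clique n E C"
    have Cs: "C \<subseteq> {0..<n}" using C unfolding clique_def by blast
    have pdC: "pd_on C A" using cl C by blast
    show "psd_on C A'" unfolding psd_on_def
    proof (intro conjI allI)
      show "hermitian_on C A'" unfolding hermitian_on_def
      proof (intro ballI)
        fix i j assume i: "i \<in> C" and j: "j \<in> C"
        have "A $$ (j, i) = cnj (A $$ (i, j))" using pdC i j unfolding pd_on_def hermitian_on_def by blast
        moreover have "i < n" "j < n" using i j Cs by auto
        ultimately show "A' $$ (j, i) = cnj (A' $$ (i, j))"
          unfolding A'_def using cA by simp
      qed
      fix x :: "nat \<Rightarrow> complex"
      have "qform C A' x = qform C A x + complex_of_real (- e) * (\<Sum>i\<in>C. cnj (x i) * x i)"
        unfolding A'_def by (rule qform_shift[OF Cs cA])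
      then have "Re (qform C A' x) = Re (qform C A x) - e * (\<Sum>i\<in>C. (norm (x i))^2)"
        by (simp add: Re_sum_cnj[symmetric])
      moreover have "e * (\<Sum>i\<in>C. (norm (x i))^2) \<le> Re (qform C A x)" using e C by blast
      ultimately show "0 \<le> Re (qform C A' x)" by simp
    qed
  qed
  then obtain M' where M': "is_completion n E A' M'" "psd_mat n M'" using c unfolding completable_def by blast
  have cM': "M' \<in> carrier_mat n n" using M' unfolding is_completion_def by blast
  define M where "M = M' + complex_of_real e \<cdot>\<^sub>m 1\<^sub>m n"
  have cM: "M \<in> carrier_mat n n" unfolding M_def using cM' by simp
  have comp: "is_completion n E A M" unfolding is_completion_def
  proof (intro conjI cM ballI)
    fix ij assume ij: "ij \<in> E"
    obtain i j where ijp: "ij = (i, j)" by (cases ij)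
    have ij': "i < n" "j < n" using graph_E[OF g] ij ijp by auto
    have "M' $$ (i, j) = A' $$ (i, j)" using M' ij ijp unfolding is_completion_def by auto
    then show "case ij of (i, j) \<Rightarrow> M $$ (i, j) = A $$ (i, j)"
      unfolding M_def A'_def using ijp ij' cA cM' by simp
  qed
  have psM': "psd_on {0..<n} M'" using M' unfolding psd_mat_def by blast
  have pd: "pd_on {0..<n} M" unfolding pd_on_def
  proof (intro conjI allI impI)
    show "hermitian_on {0..<n} M" unfolding hermitian_on_def
    proof (intro ballI)
      fix i j assume i: "i \<in> {0..<n}" and j: "j \<in> {0..<n}"
      have "M' $$ (j, i) = cnj (M' $$ (i, j))" using psM' i j unfolding psd_on_def hermitian_on_def by blast
      moreover have "i < n" "j < n" using i j by auto
      ultimately show "M $$ (j, i) = cnj (M $$ (i, j))"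
        unfolding M_def using cM' by simp
    qed
    fix x :: "nat \<Rightarrow> complex" assume "\<exists>i\<in>{0..<n}. x i \<noteq> 0"
    then obtain i where i: "i \<in> {0..<n}" "x i \<noteq> 0" by blast
    have "qform {0..<n} M x = qform {0..<n} M' x + complex_of_real e * (\<Sum>i\<in>{0..<n}. cnj (x i) * x i)"
      unfolding M_def by (rule qform_shift[OF _ cM']) simp
    then have "Re (qform {0..<n} M x) = Re (qform {0..<n} M' x) + e * (\<Sum>i\<in>{0..<n}. (norm (x i))^2)"
      by (simp add: Re_sum_cnj[symmetric])
    moreover have "0 \<le> Re (qform {0..<n} M' x)" using psM' unfolding psd_on_def by blast
    moreover have "0 < e * (\<Sum>i\<in>{0..<n}. (norm (x i))^2)" using e sum_norm_pos[of "{0..<n}" i x] i by simp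
    ultimately show "0 < Re (qform {0..<n} M x)" by simp
  qed
  show ?thesis using comp cM pd unfolding pd_mat_def by blast
qed

lemma dm_expand:
  "dm n F = (\<Sum>p \<in> {p. p permutes {0..<n}}. signof p * (\<Prod>i = 0..<n. F i (p i)))"
proof -
  have "dm n F = (\<Sum>p \<in> {p. p permutes {0..<n}}. signof p * (\<Prod>i = 0..<n. Matrix.mat n n (\<lambda>(i,j). F i j) $$ (i, p i)))"
    unfolding dm_def by (rule det_def') simp
  also have "\<dots> = (\<Sum>p \<in> {p. p permutes {0..<n}}. signof p * (\<Prod>i = 0..<n. F i (p i)))"
  proof (intro sum.cong refl arg_cong2[where f="(*)"] prod.cong)
    fix p i assume p: "p \<in> {p. p permutes {0..<n}}" and i: "i \<in> {0..<n}"
    have "p i \<in> {0..<n}" using p i by (simp add: permutes_in_image)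
    then show "Matrix.mat n n (\<lambda>(i,j). F i j) $$ (i, p i) = F i (p i)" using i by simp
  qed
  finally show ?thesis .
qed

lemma dm_tendsto:
  assumes c: "\<And>i j. i < n \<Longrightarrow> j < n \<Longrightarrow> (\<lambda>k. X k i j) \<longlonglongrightarrow> Y i j"
  shows "(\<lambda>k. dm n (X k)) \<longlonglongrightarrow> dm n Y"
  unfolding dm_expand
proof (intro tendsto_sum tendsto_mult tendsto_const tendsto_prod)
  fix p i assume p: "p \<in> {p. p permutes {0..<n}}" and i: "i \<in> {0..<n}"
  have "p i \<in> {0..<n}" using p i by (simp add: permutes_in_image)
  then show "(\<lambda>k. X k i (p i)) \<longlonglongrightarrow> Y i (p i)" using i c by simp
qed

lemma dm_bound:
  assumes b: "\<And>i j. i < n \<Longrightarrow> j < n \<Longrightarrow> norm (F i j) \<le> K" and K: "0 \<le> K"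
  shows "norm (dm n F) \<le> real (card {p. p permutes {0..<n}}) * K^n"
proof -
  have "norm (dm n F) \<le> (\<Sum>p \<in> {p. p permutes {0..<n}}. norm (signof p * (\<Prod>i = 0..<n. F i (p i)) :: complex))"
    unfolding dm_expand by (rule norm_sum)
  also have "\<dots> \<le> (\<Sum>p \<in> {p. p permutes {0..<n}}. K^n)"
  proof (rule sum_mono)
    fix p assume p: "p \<in> {p. p permutes {0..<n}}"
    have s: "norm (signof p :: complex) = 1" by (simp add: sign_def)
    have s': "\<bar>real_of_int (sign p)\<bar> = 1" by (simp add: sign_def)
    have "norm (signof p * (\<Prod>i = 0..<n. F i (p i)) :: complex) = (\<Prod>i = 0..<n. norm (F i (p i)))"
      by (simp add: norm_mult s s' prod_norm)
    also have "\<dots> \<le> (\<Prod>i = 0..<n. K)"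
    proof (rule prod_mono)
      fix i assume i: "i \<in> {0..<n}"
      have "p i \<in> {0..<n}" using p i by (simp add: permutes_in_image)
      then show "0 \<le> norm (F i (p i)) \<and> norm (F i (p i)) \<le> K" using b i by simp
    qed
    finally show "norm (signof p * (\<Prod>i = 0..<n. F i (p i)) :: complex) \<le> K^n" by simp
  qed
  also have "\<dots> = real (card {p. p permutes {0..<n}}) * K^n" by simp
  finally show ?thesis .
qed

lemma pdf_psdf: "pdf m F \<Longrightarrow> psdf m F"
  unfolding psdf_def
proof (intro conjI allI)
  assume p: "pdf m F"
  show "hermf m F" using p unfolding pdf_def by blast
  fix x :: "nat \<Rightarrow> complex"
  show "0 \<le> Re (Qf m F x)"
  proof (cases "\<exists>i<m. x i \<noteq> 0")
    case True then show ?thesis using p unfolding pdf_def by (blast intro: less_imp_le)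
  next
    case False
    then have "Qf m F x = Qf m F (\<lambda>i. 0)" by (intro Qf_cong) auto
    then show ?thesis by (simp add: Qf_def)
  qed
qed

lemma exist_maxdet:
  assumes g: "graph_on n E" and c0: "is_completion n E A M0" and p0: "pd_mat n M0"
  shows "\<exists>M. is_maxdet_completion n E A M"
proof -
  define SS where "SS = {Re (det M) | M. is_completion n E A M \<and> pd_mat n M}"
  define K where "K = (\<Sum>i<n. norm (A $$ (i,i)))"
  have K0: "0 \<le> K" unfolding K_def by (simp add: sum_nonneg)
  have loops: "(i, i) \<in> E" if "i < n" for i using g that unfolding graph_on_def by blast
  have ebound: "norm (M $$ (i,j)) \<le> K" if M: "is_completion n E A M" "pd_mat n M" and ij: "i < n" "j < n" for M i j
  proof -
    have ps: "psdf n (fM M)" using M(2) pdf_psdf unfolding pd_mat_fM by blast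
    have dg: "M $$ (l,l) = A $$ (l,l)" if "l < n" for l using M(1) loops[OF that] unfolding is_completion_def by auto
    have rl: "Re (A $$ (l,l)) \<le> K" if "l < n" for l
    proof -
      have "Re (A $$ (l,l)) \<le> norm (A $$ (l,l))" by (rule complex_Re_le_cmod)
      also have "\<dots> \<le> K" unfolding K_def using that by (intro member_le_sum) auto
      finally show ?thesis .
    qed
    have "norm (M $$ (i,j)) \<le> (Re (M $$ (i,i)) + Re (M $$ (j,j))) / 2"
      using psd_entry_bound[OF ps ij] unfolding fM_def .
    also have "\<dots> \<le> K" using dg[OF ij(1)] dg[OF ij(2)] rl[OF ij(1)] rl[OF ij(2)] by simp
    finally show ?thesis .
  qed
  define Bd where "Bd = real (card {p. p permutes {0..<n}}) * K^n"
  have dbound: "Re (det M) \<le> Bd" if M: "is_completion n E A M" "pd_mat n M" for M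
  proof -
    have cM: "M \<in> carrier_mat n n" using M(2) unfolding pd_mat_def by blast
    have "Re (det M) \<le> norm (det M)" by (rule complex_Re_le_cmod)
    also have "norm (det M) \<le> Bd" unfolding det_fM[OF cM] Bd_def
      by (rule dm_bound[OF _ K0]) (unfold fM_def, rule ebound[OF M])
    finally show ?thesis .
  qed
  have ne: "SS \<noteq> {}" unfolding SS_def using c0 p0 by blast
  have bdd: "bdd_above SS" unfolding SS_def bdd_above_def using dbound by blast
  define s where "s = Sup SS"
  have upper: "Re (det M) \<le> s" if "is_completion n E A M" "pd_mat n M" for M
    unfolding s_def using that bdd by (intro cSup_upper) (auto simp: SS_def)
  have "\<forall>k. \<exists>M. is_completion n E A M \<and> pd_mat n M \<and> s - inverse (real (Suc k)) < Re (det M)"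
  proof
    fix k
    have "s - inverse (real (Suc k)) < Sup SS" unfolding s_def by simp
    then obtain y where "y \<in> SS" "s - inverse (real (Suc k)) < y" using less_cSup_iff[OF ne bdd] by blast
    then show "\<exists>M. is_completion n E A M \<and> pd_mat n M \<and> s - inverse (real (Suc k)) < Re (det M)"
      unfolding SS_def by blast
  qed
  then obtain Ms where Ms: "\<And>k. is_completion n E A (Ms k)" "\<And>k. pd_mat n (Ms k)"
    "\<And>k. s - inverse (real (Suc k)) < Re (det (Ms k))" by metis
  have cMs: "Ms k \<in> carrier_mat n n" for k using Ms(2) unfolding pd_mat_def by blast
  have fin: "finite ({0..<n} \<times> {0..<n})" by simp
  obtain r where r: "strict_mono r" "\<forall>c\<in>{0..<n} \<times> {0..<n}. convergent (\<lambda>k. (\<lambda>k c. Ms k $$ c) (r k) c)"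
    using extract_subseq[OF fin, of "\<lambda>k c. Ms k $$ c" K] ebound[OF Ms(1) Ms(2)] by force
  define M where "M = Matrix.mat n n (\<lambda>(i,j). lim (\<lambda>k. Ms (r k) $$ (i,j)))"
  have cM: "M \<in> carrier_mat n n" unfolding M_def by simp
  have conv: "(\<lambda>k. Ms (r k) $$ (i,j)) \<longlonglongrightarrow> M $$ (i,j)" if "i < n" "j < n" for i j
  proof -
    have "convergent (\<lambda>k. Ms (r k) $$ (i,j))" using r(2) that by auto
    then show ?thesis unfolding M_def using that by (simp add: convergent_LIMSEQ_iff)
  qed
  have comp: "is_completion n E A M" unfolding is_completion_def
  proof (intro conjI cM ballI)
    fix ij assume ij: "ij \<in> E"
    obtain i j where ijp: "ij = (i, j)" by (cases ij)
    have ij': "i < n" "j < n" using graph_E[OF g] ij ijp by auto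
    have "Ms (r k) $$ (i,j) = A $$ (i,j)" for k using Ms(1) ij ijp unfolding is_completion_def by auto
    then have "(\<lambda>k. Ms (r k) $$ (i,j)) = (\<lambda>k. A $$ (i,j))" by simp
    then have "(\<lambda>k. A $$ (i,j)) \<longlonglongrightarrow> M $$ (i,j)" using conv[OF ij'] by simp
    then have "M $$ (i,j) = A $$ (i,j)" using LIMSEQ_unique tendsto_const by blast
    then show "case ij of (i, j) \<Rightarrow> M $$ (i, j) = A $$ (i, j)" using ijp by simp
  qed
  have pdMs: "pdf n (fM (Ms k))" for k using Ms(2) unfolding pd_mat_fM by blast
  have herm: "hermf n (fM M)" unfolding hermf_def
  proof (intro allI impI)
    fix i j assume ij: "i < n" "j < n"
    have "fM (Ms (r k)) j i = cnj (fM (Ms (r k)) i j)" for k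
      using herm_inst[OF _ ij] pdMs unfolding pdf_def by blast
    then have "(\<lambda>k. Ms (r k) $$ (j,i)) = (\<lambda>k. cnj (Ms (r k) $$ (i,j)))" unfolding fM_def by simp
    moreover have "(\<lambda>k. cnj (Ms (r k) $$ (i,j))) \<longlonglongrightarrow> cnj (M $$ (i,j))" by (intro tendsto_cnj conv ij)
    ultimately have "(\<lambda>k. Ms (r k) $$ (j,i)) \<longlonglongrightarrow> cnj (M $$ (i,j))" by simp
    then show "fM M j i = cnj (fM M i j)" unfolding fM_def using conv[of j i] ij LIMSEQ_unique by blast
  qed
  have psd: "psdf n (fM M)" unfolding psdf_def
  proof (intro conjI herm allI)
    fix x :: "nat \<Rightarrow> complex"
    have "(\<lambda>k. Re (Qf n (fM (Ms (r k))) x)) \<longlonglongrightarrow> Re (Qf n (fM M) x)"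
      unfolding Qf_def fM_def by (intro tendsto_intros conv) auto
    moreover have "\<forall>k. 0 \<le> Re (Qf n (fM (Ms (r k))) x)" using pdf_psdf[OF pdMs] unfolding psdf_def by blast
    ultimately show "0 \<le> Re (Qf n (fM M) x)" by (meson LIMSEQ_le_const)
  qed
  have tdet: "(\<lambda>k. Re (det (Ms (r k)))) \<longlonglongrightarrow> Re (det M)"
  proof -
    have "(\<lambda>k. dm n (fM (Ms (r k)))) \<longlonglongrightarrow> dm n (fM M)"
      by (rule dm_tendsto) (unfold fM_def, rule conv)
    then have "(\<lambda>k. det (Ms (r k))) \<longlonglongrightarrow> det M" using det_fM[OF cM] det_fM[OF cMs] by simp
    then show ?thesis by (rule tendsto_Re)
  qed
  have low: "(\<lambda>k. s - inverse (real (Suc k))) \<longlonglongrightarrow> s"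
    using tendsto_diff[OF tendsto_const LIMSEQ_inverse_real_of_nat, of s] by simp
  have sle: "s \<le> Re (det M)"
  proof (rule LIMSEQ_le[OF low tdet])
    show "\<exists>N. \<forall>k\<ge>N. s - inverse (real (Suc k)) \<le> Re (det (Ms (r k)))"
    proof (intro exI allI impI)
      fix k :: nat
      have "k \<le> r k" using seq_suble[OF r(1)] by blast
      then have "inverse (real (Suc (r k))) \<le> inverse (real (Suc k))" by (simp add: le_imp_inverse_le)
      then have "s - inverse (real (Suc k)) \<le> s - inverse (real (Suc (r k)))" by simp
      then show "s - inverse (real (Suc k)) \<le> Re (det (Ms (r k)))"
        using Ms(3)[of "r k"] by (meson less_imp_le order_le_less_trans)
    qed
  qed
  have cM0: "M0 \<in> carrier_mat n n" using p0 unfolding pd_mat_def by blast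
  obtain r0 where r0: "r0 > 0" "dm n (fM M0) = of_real r0" using det_pos p0 unfolding pd_mat_fM by blast
  have "0 < Re (det M0)" using det_fM[OF cM0] r0 by simp
  also have "Re (det M0) \<le> s" using upper[OF c0 p0] .
  finally have "0 < Re (det M)" using sle by simp
  then have "dm n (fM M) \<noteq> 0" using det_fM[OF cM] by auto
  then have "pdf n (fM M)" using psd_det_pd[OF psd] by blast
  then have pdM: "pd_mat n M" unfolding pd_mat_fM using cM by blast
  have "is_maxdet_completion n E A M" unfolding is_maxdet_completion_def
    using comp pdM upper sle by (meson order_trans)
  then show ?thesis by blast
qed

theorem theorem6p12:
  fixes n :: nat and E :: "(nat \<times> nat) set" and A B :: "complex mat"
  assumes "graph_on n E"
    and "completable n E"
    and "partial_pd n E A"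
    and "partial_le n E A B"
    and "B \<in> carrier_mat n n"
  shows "(\<exists>!Ah. is_maxdet_completion n E A Ah) \<and> (\<exists>!Bh. is_maxdet_completion n E B Bh) \<and>
         0 < Re (det (THE Ah. is_maxdet_completion n E A Ah)) \<and>
         Re (det (THE Ah. is_maxdet_completion n E A Ah))
           \<le> Re (det (THE Bh. is_maxdet_completion n E B Bh))"
proof -
  note g = assms(1)
  have cA: "A \<in> carrier_mat n n" using assms(3) unfolding partial_pd_def by blast
  obtain M0 where M0: "is_completion n E A M0" "pd_mat n M0" using pd_completion_exists[OF assms(1-3)] by blast
  obtain Ah where Ah: "is_maxdet_completion n E A Ah" using exist_maxdet[OF g M0] by blast
  have uA: "\<exists>!Ah. is_maxdet_completion n E A Ah" using Ah unique_maxdet[OF g] by blast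
  have tA: "(THE Ah. is_maxdet_completion n E A Ah) = Ah" using Ah unique_maxdet[OF g] by blast
  have cAh: "Ah \<in> carrier_mat n n" and pAh: "pdf n (fM Ah)"
    using Ah unfolding is_maxdet_completion_def pd_mat_fM by auto
  have "partial_psd n E (B - A)" using assms(4) unfolding partial_le_def .
  then obtain D where D: "is_completion n E (B - A) D" "psd_mat n D"
    using assms(2) unfolding completable_def by blast
  have cD: "D \<in> carrier_mat n n" and pD: "psdf n (fM D)" using D unfolding psd_mat_fM by auto
  define N where "N = Ah + D"
  have cN: "N \<in> carrier_mat n n" unfolding N_def using cAh cD by simp
  have fN: "fM N i j = fM Ah i j + fM D i j" if "i < n" "j < n" for i j
    unfolding N_def fM_def using that cAh cD by simp
  have pN: "pdf n (fM N)"
    using pd_add_psd[OF pAh pD] pdf_cong[of n "fM N" "\<lambda>i j. fM Ah i j + fM D i j"] fN by simp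
  have compN: "is_completion n E B N" unfolding is_completion_def
  proof (intro conjI cN ballI)
    fix ij assume ij: "ij \<in> E"
    obtain i j where ijp: "ij = (i, j)" by (cases ij)
    have ij': "i < n" "j < n" using graph_E[OF g] ij ijp by auto
    have "Ah $$ (i,j) = A $$ (i,j)" "D $$ (i,j) = (B - A) $$ (i,j)"
      using Ah D ij ijp unfolding is_maxdet_completion_def is_completion_def by auto
    then show "case ij of (i, j) \<Rightarrow> N $$ (i, j) = B $$ (i, j)"
      using ijp ij' cA assms(5) cAh cD unfolding N_def by simp
  qed
  have pdN: "pd_mat n N" unfolding pd_mat_fM using cN pN by simp
  obtain Bh where Bh: "is_maxdet_completion n E B Bh" using exist_maxdet[OF g compN pdN] by blast
  have uB: "\<exists>!Bh. is_maxdet_completion n E B Bh" using Bh unique_maxdet[OF g] by blast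
  have tB: "(THE Bh. is_maxdet_completion n E B Bh) = Bh" using Bh unique_maxdet[OF g] by blast
  have le1: "Re (det N) \<le> Re (det Bh)" using Bh compN pdN unfolding is_maxdet_completion_def by blast
  have "Re (dm n (fM Ah)) \<le> Re (dm n (\<lambda>i j. fM Ah i j + fM D i j))"
    using mono_det[OF pAh pD] by blast
  moreover have "dm n (\<lambda>i j. fM Ah i j + fM D i j) = det N"
    using det_fM[OF cN] dm_cong[of n "fM N" "\<lambda>i j. fM Ah i j + fM D i j"] fN by simp
  ultimately have le2: "Re (det Ah) \<le> Re (det N)" using det_fM[OF cAh] by simp
  obtain r where r: "r > 0" "dm n (fM Ah) = of_real r" using det_pos[OF pAh] by blast
  have pos: "0 < Re (det Ah)" using det_fM[OF cAh] r by simp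
  show ?thesis using uA uB tA tB pos le1 le2 by simp
qed

end
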